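(* Let $G=(V,E,w)$ be a connected, locally finite weighted graph with edge weights $w_e>0$, let $x\in V$, and let $u:V\to\mathbb{R}$ satisfy $\sum_{y:\,(v,y)\in E} w_{vy}(u(y)-u(v))=0$ for every $v\in V$. For integers $k\ge 0$ define $$N(k) = \sum_{y \in V:\, d(x,y)=k+1} d_{\mathrm{in}}(y)\, u(y)^2 \;-\; \sum_{y \in V:\, d(x,y)=k} d_{\mathrm{out}}(y)\, u(y)^2 .$$ Then $N(k)\ge 0$ and $N(k+1)\ge N(k)$ for all $k\ge 0$.
   Context: $d(\cdot,\cdot)$ is the unweighted graph (shortest-path, number of edges) distance in $G$. Let $V_k=\{v\in V: d(x,v)=k\}$. For $v\in V_k$, the weighted in-degree is $d_{\mathrm{in}}(v)=\sum_{y\in V_{k-1},\,(y,v)\in E} w_{yv}$ and the weighted out-degree is $d_{\mathrm{out}}(v)=\sum_{y\in V_{k+1},\,(v,y)\in E} w_{vy}$. *)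

theory Defs
  imports Complex_Main
begin

definition gdist :: "('a \<Rightarrow> 'a \<Rightarrow> bool) \<Rightarrow> 'a \<Rightarrow> 'a \<Rightarrow> nat" where
  "gdist E a b = (LEAST n. (E ^^ n) a b)"

definition connected_graph :: "'a set \<Rightarrow> ('a \<Rightarrow> 'a \<Rightarrow> bool) \<Rightarrow> bool" where
  "connected_graph V E \<longleftrightarrow> (\<forall>a\<in>V. \<forall>b\<in>V. \<exists>n. (E ^^ n) a b)"

definition locally_finite :: "'a set \<Rightarrow> ('a \<Rightarrow> 'a \<Rightarrow> bool) \<Rightarrow> bool" where
  "locally_finite V E \<longleftrightarrow> (\<forall>v\<in>V. finite {y. E v y})"

definition din :: "'a set \<Rightarrow> ('a \<Rightarrow> 'a \<Rightarrow> bool) \<Rightarrow> ('a \<Rightarrow> 'a \<Rightarrow> real) \<Rightarrow> 'a \<Rightarrow> 'a \<Rightarrow> real" where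
  "din V E w x v = (\<Sum>y\<in>{y\<in>V. E y v \<and> gdist E x y + 1 = gdist E x v}. w y v)"

definition dout :: "'a set \<Rightarrow> ('a \<Rightarrow> 'a \<Rightarrow> bool) \<Rightarrow> ('a \<Rightarrow> 'a \<Rightarrow> real) \<Rightarrow> 'a \<Rightarrow> 'a \<Rightarrow> real" where
  "dout V E w x v = (\<Sum>y\<in>{y\<in>V. E v y \<and> gdist E x y = gdist E x v + 1}. w v y)"

definition Nfun :: "'a set \<Rightarrow> ('a \<Rightarrow> 'a \<Rightarrow> bool) \<Rightarrow> ('a \<Rightarrow> 'a \<Rightarrow> real) \<Rightarrow> 'a \<Rightarrow> ('a \<Rightarrow> real) \<Rightarrow> nat \<Rightarrow> real" where
  "Nfun V E w x u k =
     (\<Sum>y\<in>{y\<in>V. gdist E x y = k + 1}. din V E w x y * (u y)\<^sup>2)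
   - (\<Sum>y\<in>{y\<in>V. gdist E x y = k}. dout V E w x y * (u y)\<^sup>2)"

end

theory Submission
  imports Defs
begin

theorem mainTheorem2:
  fixes V :: "'a set" and E :: "'a \<Rightarrow> 'a \<Rightarrow> bool" and w :: "'a \<Rightarrow> 'a \<Rightarrow> real"
    and x :: 'a and u :: "'a \<Rightarrow> real"
  assumes E_in_V: "\<And>a b. E a b \<Longrightarrow> a \<in> V \<and> b \<in> V"
    and E_sym: "\<And>a b. E a b \<Longrightarrow> E b a"
    and w_sym: "\<And>a b. E a b \<Longrightarrow> w a b = w b a"
    and w_pos: "\<And>a b. E a b \<Longrightarrow> w a b > 0"
    and conn: "connected_graph V E"
    and locfin: "locally_finite V E"
    and x_in: "x \<in> V"
    and harmonic: "\<And>v. v \<in> V \<Longrightarrow> (\<Sum>y\<in>{y. E v y}. w v y * (u y - u v)) = 0"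
  shows "\<forall>k. Nfun V E w x u k \<ge> 0 \<and> Nfun V E w x u (k + 1) \<ge> Nfun V E w x u k"
proof -
  define d where "d v = gdist E x v" for v
  define S where "S m = {v\<in>V. d v = m}" for m
  define f where "f v = (u v)^2" for v
  define g where "g v y = w v y * (f y - f v)" for v y
  have path: "(E^^(d v)) x v" if "v \<in> V" for v
    using conn x_in that unfolding connected_graph_def d_def gdist_def by (meson LeastI)
  have dle: "d v \<le> n" if "(E^^n) x v" for v n
    using that unfolding d_def gdist_def by (rule Least_le)
  have nb: "d b \<le> d a + 1" if "E a b" for a b
  proof -
    have "a \<in> V" using E_in_V that by blast
    hence "(E^^(Suc (d a))) x b" using path that relpowp_Suc_I by metis
    thus ?thesis using dle by fastforce
  qed
  have finN: "finite {b. E a b}" for a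
  proof (cases "a \<in> V")
    case True then show ?thesis using locfin unfolding locally_finite_def by blast
  next
    case False then have "{b. E a b} = {}" using E_in_V by blast
    then show ?thesis by simp
  qed
  have finR: "finite {v. (E^^m) x v}" for m
  proof (induction m)
    case 0 then show ?case by simp
  next
    case (Suc m)
    have "{v. (E^^Suc m) x v} = (\<Union>a\<in>{v. (E^^m) x v}. {b. E a b})"
      by (auto intro: relpowp_Suc_I elim: relpowp_Suc_E)
    then show ?case using Suc finN by simp
  qed
  have finS: "finite (S m)" for m
    by (rule finite_subset[OF _ finR[of m]]) (auto simp: S_def dest: path)
  have lap: "(\<Sum>y\<in>{y. E v y}. g v y) \<ge> 0" if "v \<in> V" for v
  proof -
    have "(\<Sum>y\<in>{y. E v y}. g v y) = (\<Sum>y\<in>{y. E v y}. w v y * (u y - u v)^2 + 2 * u v * (w v y * (u y - u v)))"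
      by (rule sum.cong) (auto simp: g_def f_def algebra_simps power2_eq_square)
    also have "\<dots> = (\<Sum>y\<in>{y. E v y}. w v y * (u y - u v)^2) + 2 * u v * (\<Sum>y\<in>{y. E v y}. w v y * (u y - u v))"
      by (simp add: sum.distrib sum_distrib_left)
    also have "\<dots> = (\<Sum>y\<in>{y. E v y}. w v y * (u y - u v)^2)" using harmonic that by simp
    also have "\<dots> \<ge> 0" by (rule sum_nonneg) (simp add: less_imp_le w_pos)
    finally show ?thesis .
  qed
  define Fup where "Fup m = (\<Sum>a\<in>S m. \<Sum>y\<in>{y\<in>S (Suc m). E a y}. g a y)" for m
  have NF: "Nfun V E w x u m = Fup m" for m
  proof -
    have din: "din V E w x y = (\<Sum>a\<in>{a\<in>S m. E a y}. w a y)" if "y \<in> S (Suc m)" for y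
      unfolding din_def using that by (intro sum.cong) (auto simp: S_def d_def)
    have dout: "dout V E w x a = (\<Sum>y\<in>{y\<in>S (Suc m). E a y}. w a y)" if "a \<in> S m" for a
      unfolding dout_def using that by (intro sum.cong) (auto simp: S_def d_def)
    have "Nfun V E w x u m = (\<Sum>y\<in>S (Suc m). din V E w x y * f y) - (\<Sum>a\<in>S m. dout V E w x a * f a)"
      unfolding Nfun_def S_def d_def f_def by simp
    also have "\<dots> = (\<Sum>y\<in>S (Suc m). (\<Sum>a\<in>{a\<in>S m. E a y}. w a y) * f y) - (\<Sum>a\<in>S m. (\<Sum>y\<in>{y\<in>S (Suc m). E a y}. w a y) * f a)"
      using din dout by simp
    also have "\<dots> = (\<Sum>y\<in>S (Suc m). \<Sum>a\<in>{a\<in>S m. E a y}. w a y * f y) - (\<Sum>a\<in>S m. \<Sum>y\<in>{y\<in>S (Suc m). E a y}. w a y * f a)"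
      by (simp add: sum_distrib_right)
    also have "(\<Sum>y\<in>S (Suc m). \<Sum>a\<in>{a\<in>S m. E a y}. w a y * f y) = (\<Sum>a\<in>S m. \<Sum>y\<in>{y\<in>S (Suc m). E a y}. w a y * f y)"
      by (rule sum.swap_restrict[symmetric]) (auto simp: finS)
    also have "(\<Sum>a\<in>S m. \<Sum>y\<in>{y\<in>S (Suc m). E a y}. w a y * f y) - (\<Sum>a\<in>S m. \<Sum>y\<in>{y\<in>S (Suc m). E a y}. w a y * f a) = Fup m"
      unfolding Fup_def g_def by (simp add: sum_subtractf[symmetric] right_diff_distrib)
    finally show ?thesis .
  qed
  have same0: "(\<Sum>a\<in>S m. \<Sum>y\<in>{y\<in>S m. E a y}. g a y) = 0" for m
  proof -
    let ?X = "(\<Sum>a\<in>S m. \<Sum>y\<in>{y\<in>S m. E a y}. g a y)"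
    have "?X = (\<Sum>y\<in>S m. \<Sum>a\<in>{a\<in>S m. E a y}. g a y)"
      by (rule sum.swap_restrict) (auto simp: finS)
    also have "\<dots> = (\<Sum>y\<in>S m. \<Sum>a\<in>{a\<in>S m. E y a}. - g y a)"
      by (intro sum.cong refl) (auto simp: g_def w_sym E_sym algebra_simps)
    also have "\<dots> = - ?X" by (simp add: sum_negf)
    finally show ?thesis by simp
  qed
  have dn: "(\<Sum>a\<in>S (Suc k). \<Sum>y\<in>{y\<in>S k. E a y}. g a y) = - Fup k" for k
  proof -
    have "(\<Sum>a\<in>S (Suc k). \<Sum>y\<in>{y\<in>S k. E a y}. g a y) = (\<Sum>y\<in>S k. \<Sum>a\<in>{a\<in>S (Suc k). E a y}. g a y)"
      by (rule sum.swap_restrict) (auto simp: finS)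
    also have "\<dots> = (\<Sum>y\<in>S k. \<Sum>a\<in>{a\<in>S (Suc k). E y a}. - g y a)"
      by (intro sum.cong refl) (auto simp: g_def w_sym E_sym algebra_simps)
    also have "\<dots> = - Fup k" by (simp add: sum_negf Fup_def)
    finally show ?thesis .
  qed
  have split: "(\<Sum>y\<in>{y. E v y}. g v y) = (\<Sum>y\<in>{y\<in>V. E v y \<and> d y + 1 = d v}. g v y)
      + (\<Sum>y\<in>{y\<in>V. E v y \<and> d y = d v}. g v y) + (\<Sum>y\<in>{y\<in>V. E v y \<and> d y = d v + 1}. g v y)" for v
  proof -
    have eq: "{y. E v y} = ({y\<in>V. E v y \<and> d y + 1 = d v} \<union> {y\<in>V. E v y \<and> d y = d v}) \<union> {y\<in>V. E v y \<and> d y = d v + 1}"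
    proof (auto simp: E_in_V)
      fix y assume "E v y" "d y \<noteq> d v" "d y \<noteq> Suc (d v)"
      moreover have "d y \<le> d v + 1" "d v \<le> d y + 1" using nb[of v y] nb[of y v] E_sym \<open>E v y\<close> by auto
      ultimately show "Suc (d y) = d v" by linarith
    qed
    have fin: "finite {y\<in>V. E v y \<and> P y}" for P by (rule finite_subset[OF _ finN[of v]]) auto
    show ?thesis
      by (subst eq, subst sum.union_disjoint, auto simp: fin, subst sum.union_disjoint, auto simp: fin)
  qed
  have P: "(\<Sum>v\<in>S m. \<Sum>y\<in>{y. E v y}. g v y) = Fup m + (\<Sum>v\<in>S m. \<Sum>y\<in>{y\<in>V. E v y \<and> d y + 1 = d v}. g v y)" for m
  proof -
    have "(\<Sum>v\<in>S m. \<Sum>y\<in>{y. E v y}. g v y) = (\<Sum>v\<in>S m. \<Sum>y\<in>{y\<in>V. E v y \<and> d y + 1 = d v}. g v y)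
      + (\<Sum>v\<in>S m. \<Sum>y\<in>{y\<in>S m. E v y}. g v y) + (\<Sum>v\<in>S m. \<Sum>y\<in>{y\<in>S (Suc m). E v y}. g v y)"
    proof -
      have "(\<Sum>v\<in>S m. \<Sum>y\<in>{y. E v y}. g v y) = (\<Sum>v\<in>S m. (\<Sum>y\<in>{y\<in>V. E v y \<and> d y + 1 = d v}. g v y)
      + (\<Sum>y\<in>{y\<in>S m. E v y}. g v y) + (\<Sum>y\<in>{y\<in>S (Suc m). E v y}. g v y))"
      proof (intro sum.cong refl)
        fix v assume "v \<in> S m"
        then have "{y\<in>V. E v y \<and> d y = d v} = {y\<in>S m. E v y}" "{y\<in>V. E v y \<and> d y = d v + 1} = {y\<in>S (Suc m). E v y}"
          by (auto simp: S_def)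
        then show "(\<Sum>y\<in>{y. E v y}. g v y) = (\<Sum>y\<in>{y\<in>V. E v y \<and> d y + 1 = d v}. g v y)
      + (\<Sum>y\<in>{y\<in>S m. E v y}. g v y) + (\<Sum>y\<in>{y\<in>S (Suc m). E v y}. g v y)" using split[of v] by simp
      qed
      then show ?thesis by (simp add: sum.distrib)
    qed
    then show ?thesis using same0[of m] by (simp add: Fup_def)
  qed
  have P0: "Fup 0 \<ge> 0"
  proof -
    have "(\<Sum>v\<in>S 0. \<Sum>y\<in>{y\<in>V. E v y \<and> d y + 1 = d v}. g v y) = 0"
      by (intro sum.neutral) (auto simp: S_def)
    moreover have "(\<Sum>v\<in>S 0. \<Sum>y\<in>{y. E v y}. g v y) \<ge> 0"
      by (rule sum_nonneg) (auto simp: S_def lap)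
    ultimately show ?thesis using P[of 0] by simp
  qed
  have PS: "Fup (Suc k) \<ge> Fup k" for k
  proof -
    have "(\<Sum>v\<in>S (Suc k). \<Sum>y\<in>{y\<in>V. E v y \<and> d y + 1 = d v}. g v y) = (\<Sum>a\<in>S (Suc k). \<Sum>y\<in>{y\<in>S k. E a y}. g a y)"
      by (intro sum.cong refl) (auto simp: S_def)
    moreover have "(\<Sum>v\<in>S (Suc k). \<Sum>y\<in>{y. E v y}. g v y) \<ge> 0"
      by (rule sum_nonneg) (auto simp: S_def lap)
    ultimately show ?thesis using P[of "Suc k"] dn[of k] by simp
  qed
  have "Fup k \<ge> 0" for k
  proof (induction k)
    case 0 then show ?case using P0 .
  next
    case (Suc k) then show ?case using PS[of k] by linarith
  qed
  then show ?thesis using PS NF by simp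
qed

end
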